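(* Let $(X, A, Y(0), Y(1))$ be a random vector with $X \in \mathbb{R}^d$ covariates, $A \in \{0,1\}$ a binary treatment and $Y(0), Y(1) \in \mathbb{R}$ potential outcomes. Let $f:\mathbb{R}^d \to [0,1]$ be a weight function and let $V \sim \mathrm{Unif}(0,1)$ be drawn independently of $(X, A, Y(0), Y(1))$. Define the pair of flip interventions \[ D_f(0) = A\,\mathbf{1}\{V > f(X)\}, \qquad D_f(1) = A + (1-A)\,\mathbf{1}\{V \le f(X)\}, \] and the interventional flip effect \[ \psi_f = \frac{\mathbb{E}\big[ Y\{D_f(1)\} - Y\{D_f(0)\}\big]}{\mathbb{E}\{D_f(1) - D_f(0)\}}. \] Then \[ \psi_f = \mathbb{E}\left[ \frac{\mathbb{E}\{Y(1) - Y(0) \mid X\}\, f(X)}{\mathbb{E}\{f(X)\}} \right]. \]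
   Context: For a (possibly random) treatment decision $D \in \{0,1\}$, $Y(D)$ denotes the potential outcome under decision $D$, i.e. $Y(D) = D\,Y(1) + (1-D)\,Y(0)$. The observed outcome is $Y = Y(A)$ (consistency). The right-hand side is a weighted average treatment effect with weight $f$; the ratio $\psi_f$ is assumed well defined (i.e. $\mathbb{E}\{f(X)\}>0$ and the relevant expectations exist). *)

theory Defs
  imports "HOL-Probability.Probability"
begin

definition pot_outcome :: "('w \<Rightarrow> real) \<Rightarrow> ('w \<Rightarrow> real) \<Rightarrow> ('w \<Rightarrow> real) \<Rightarrow> 'w \<Rightarrow> real" where
  "pot_outcome Y0 Y1 D w = D w * Y1 w + (1 - D w) * Y0 w"

definition flip0 :: "('x \<Rightarrow> real) \<Rightarrow> ('w \<Rightarrow> 'x) \<Rightarrow> ('w \<Rightarrow> real) \<Rightarrow> ('w \<Rightarrow> real) \<Rightarrow> 'w \<Rightarrow> real" where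
  "flip0 f X A V w = A w * of_bool (V w > f (X w))"

definition flip1 :: "('x \<Rightarrow> real) \<Rightarrow> ('w \<Rightarrow> 'x) \<Rightarrow> ('w \<Rightarrow> real) \<Rightarrow> ('w \<Rightarrow> real) \<Rightarrow> 'w \<Rightarrow> real" where
  "flip1 f X A V w = A w + (1 - A w) * of_bool (V w \<le> f (X w))"

definition flip_effect :: "'w measure \<Rightarrow> ('x \<Rightarrow> real) \<Rightarrow> ('w \<Rightarrow> 'x) \<Rightarrow> ('w \<Rightarrow> real) \<Rightarrow> ('w \<Rightarrow> real)
    \<Rightarrow> ('w \<Rightarrow> real) \<Rightarrow> ('w \<Rightarrow> real) \<Rightarrow> real" where
  "flip_effect M f X A Y0 Y1 V =
     (\<integral>w. pot_outcome Y0 Y1 (flip1 f X A V) w - pot_outcome Y0 Y1 (flip0 f X A V) w \<partial>M)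
     / (\<integral>w. flip1 f X A V w - flip0 f X A V w \<partial>M)"

end

theory Submission
  imports Defs
begin

lemma key:
  fixes M :: "'w measure"
    and X :: "'w \<Rightarrow> real ^ 'd"
    and A Y0 Y1 V :: "'w \<Rightarrow> real"
    and f :: "real ^ 'd \<Rightarrow> real"
    and h :: "(real ^ 'd) \<times> real \<times> real \<times> real \<Rightarrow> real"
  assumes "prob_space M"
    and [measurable]: "X \<in> borel_measurable M"
    and [measurable]: "A \<in> borel_measurable M"
    and [measurable]: "Y0 \<in> borel_measurable M"
    and [measurable]: "Y1 \<in> borel_measurable M"
    and [measurable]: "f \<in> borel_measurable borel"
    and f01: "\<forall>x. f x \<in> {0..1}"
    and [measurable]: "V \<in> borel_measurable M"
    and unif: "distr M lborel V = uniform_measure lborel {0<..<1}"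
    and ind: "\<forall>S\<in>sets (borel :: real measure). \<forall>T\<in>sets (borel :: ((real ^ 'd) \<times> real \<times> real \<times> real) measure).
         measure M {w\<in>space M. V w \<in> S \<and> (X w, A w, Y0 w, Y1 w) \<in> T}
         = measure M {w\<in>space M. V w \<in> S} * measure M {w\<in>space M. (X w, A w, Y0 w, Y1 w) \<in> T}"
    and [measurable]: "h \<in> borel_measurable borel"
    and hint: "integrable M (\<lambda>w. h (X w, A w, Y0 w, Y1 w))"
  shows "(\<integral>w. of_bool (V w \<le> f (X w)) * h (X w, A w, Y0 w, Y1 w) \<partial>M)
       = (\<integral>w. f (X w) * h (X w, A w, Y0 w, Y1 w) \<partial>M)"
proof -
  interpret prob_space M by fact
  define Z where "Z w = (X w, A w, Y0 w, Y1 w)" for w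
  have Zm[measurable]: "Z \<in> borel_measurable M" unfolding Z_def by measurable
  define PZ where "PZ = distr M borel Z"
  define PV where "PV = distr M borel V"
  have pPZ: "prob_space PZ" unfolding PZ_def by (rule prob_space_distr) simp
  have pPV: "prob_space PV" unfolding PV_def by (rule prob_space_distr) simp
  interpret PZ: prob_space PZ by fact
  interpret PV: prob_space PV by fact
  interpret P: pair_sigma_finite PZ PV
    by (simp add: PV.sigma_finite_measure_axioms PZ.sigma_finite_measure_axioms pair_sigma_finite.intro)
  have joint: "PZ \<Otimes>\<^sub>M PV = distr M (borel \<Otimes>\<^sub>M borel) (\<lambda>w. (Z w, V w))"
  proof (rule pair_measure_eqI)
    show "sets (PZ \<Otimes>\<^sub>M PV) = sets (distr M (borel \<Otimes>\<^sub>M borel) (\<lambda>w. (Z w, V w)))"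
      unfolding PZ_def PV_def by simp
    fix S T assume S: "S \<in> sets PZ" and T: "T \<in> sets PV"
    have S': "S \<in> sets borel" using S unfolding PZ_def by simp
    have T': "T \<in> sets borel" using T unfolding PV_def by simp
    have "emeasure (distr M (borel \<Otimes>\<^sub>M borel) (\<lambda>w. (Z w, V w))) (S \<times> T)
        = emeasure M {w\<in>space M. V w \<in> T \<and> Z w \<in> S}"
      using S' T' by (subst emeasure_distr) (auto intro!: arg_cong[where f="emeasure M"])
    also have "\<dots> = ennreal (measure M {w\<in>space M. V w \<in> T} * measure M {w\<in>space M. Z w \<in> S})"
      using ind S' T' unfolding Z_def by (simp add: emeasure_eq_measure)
    also have "\<dots> = emeasure PZ S * emeasure PV T"
      using S' T' unfolding PZ_def PV_def
      by (simp add: emeasure_distr emeasure_eq_measure ennreal_mult' vimage_def Int_def conj_commute mult.commute)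
    finally show "emeasure PZ S * emeasure PV T = emeasure (distr M (borel \<Otimes>\<^sub>M borel) (\<lambda>w. (Z w, V w))) (S \<times> T)" ..
  qed (auto simp: PZ.sigma_finite_measure_axioms PV.sigma_finite_measure_axioms)
  have fm: "(fst :: (real ^ 'd) \<times> real \<times> real \<times> real \<Rightarrow> real ^ 'd) \<in> borel_measurable borel"
    by (intro borel_measurable_continuous_onI continuous_intros)
  have fz[measurable]: "(\<lambda>z::(real ^ 'd) \<times> real \<times> real \<times> real. f (fst z)) \<in> borel_measurable borel"
    by (rule measurable_compose[OF fm]) simp
  define g where "g p = of_bool (snd p \<le> f (fst (fst p))) * h (fst p)" for p :: "((real ^ 'd) \<times> real \<times> real \<times> real) \<times> real"
  have gm[measurable]: "g \<in> borel_measurable (borel \<Otimes>\<^sub>M borel)" 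
  proof -
    have h1: "(\<lambda>p. h (fst p)) \<in> borel_measurable (borel \<Otimes>\<^sub>M (borel::real measure))"
      by (rule measurable_compose[OF measurable_fst]) simp
    have h2: "(\<lambda>p::((real ^ 'd) \<times> real \<times> real \<times> real) \<times> real. f (fst (fst p))) \<in> borel_measurable (borel \<Otimes>\<^sub>M borel)"
      using fz by (rule measurable_compose[OF measurable_fst])
    have h3: "(\<lambda>p::((real ^ 'd) \<times> real \<times> real \<times> real) \<times> real. snd p) \<in> borel_measurable (borel \<Otimes>\<^sub>M borel)"
      by measurable
    have "g = (\<lambda>p. if snd p \<le> f (fst (fst p)) then h (fst p) else 0)"
      by (auto simp: g_def fun_eq_iff)
    also have "\<dots> \<in> borel_measurable (borel \<Otimes>\<^sub>M borel)"
      using h1 h2 h3 by measurable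
    finally show ?thesis .
  qed
  have gmP: "g \<in> borel_measurable (PZ \<Otimes>\<^sub>M PV)" using gm unfolding PZ_def PV_def by simp
  have intM: "integrable M (\<lambda>w. g (Z w, V w))"
  proof (rule Bochner_Integration.integrable_bound[OF hint])
    show "(\<lambda>w. g (Z w, V w)) \<in> borel_measurable M" by measurable
    show "AE w in M. norm (g (Z w, V w)) \<le> norm (h (X w, A w, Y0 w, Y1 w))"
      by (auto simp: g_def Z_def)
  qed
  have intP: "integrable (PZ \<Otimes>\<^sub>M PV) g"
    unfolding joint by (subst integrable_distr_eq) (use intM in auto)
  have PVu: "PV = uniform_measure lborel {0<..<1}"
    unfolding PV_def unif[symmetric] by (rule distr_cong) auto
  have mPV: "measure PV {..t} = t" if t: "0 \<le> t" "t \<le> 1" for t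
  proof -
    have "emeasure lborel ({0<..<1} \<inter> {..t}) = ennreal t"
    proof (cases "t = 1")
      case True
      then have "{0<..<1} \<inter> {..t} = {0<..<(1::real)}" by auto
      then show ?thesis using True by simp
    next
      case False
      then have "{0<..<1} \<inter> {..t} = {0<..t}" using t by auto
      then show ?thesis using t by (simp add: emeasure_lborel_Ioc)
    qed
    then have "emeasure PV {..t} = ennreal t" unfolding PVu by (simp add: divide_ennreal_def)
    then show ?thesis using t by (simp add: measure_def)
  qed
  have inner: "(\<integral>v. g (z, v) \<partial>PV) = f (fst z) * h z" for z
  proof -
    have "(\<integral>v. g (z, v) \<partial>PV) = (\<integral>v. indicator {..f (fst z)} v * h z \<partial>PV)"
      by (rule Bochner_Integration.integral_cong) (auto simp: g_def indicator_def)
    also have "\<dots> = measure PV {..f (fst z)} * h z" by (simp add: PV_def)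
    also have "\<dots> = f (fst z) * h z" using f01 mPV by auto
    finally show ?thesis .
  qed
  have "(\<integral>w. of_bool (V w \<le> f (X w)) * h (X w, A w, Y0 w, Y1 w) \<partial>M) = (\<integral>w. g (Z w, V w) \<partial>M)"
    by (simp add: g_def Z_def)
  also have "\<dots> = integral\<^sup>L (distr M (borel \<Otimes>\<^sub>M borel) (\<lambda>w. (Z w, V w))) g"
    by (subst integral_distr) auto
  also have "\<dots> = integral\<^sup>L (PZ \<Otimes>\<^sub>M PV) g" unfolding joint ..
  also have "\<dots> = (\<integral>z. (\<integral>v. g (z, v) \<partial>PV) \<partial>PZ)" using P.integral_fst'[OF intP] by simp
  also have "\<dots> = (\<integral>z. f (fst z) * h z \<partial>PZ)" by (simp add: inner)
  also have "\<dots> = (\<integral>w. f (X w) * h (X w, A w, Y0 w, Y1 w) \<partial>M)"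
    unfolding PZ_def by (subst integral_distr) (auto simp: Z_def intro!: borel_measurable_times fz)
  finally show ?thesis .
qed
theorem proposition1:
  fixes M :: "'w measure"
    and X :: "'w \<Rightarrow> real ^ 'd"
    and A Y0 Y1 V :: "'w \<Rightarrow> real"
    and f :: "real ^ 'd \<Rightarrow> real"
  assumes "prob_space M"
    and "X \<in> borel_measurable M"
    and "A \<in> borel_measurable M"
    and "\<forall>w\<in>space M. A w \<in> {0, 1}"
    and "integrable M Y0"
    and "integrable M Y1"
    and "f \<in> borel_measurable borel"
    and "\<forall>x. f x \<in> {0..1}"
    and "V \<in> borel_measurable M"
    and "distr M lborel V = uniform_measure lborel {0<..<1}"
    and "\<forall>S\<in>sets (borel :: real measure). \<forall>T\<in>sets (borel :: ((real ^ 'd) \<times> real \<times> real \<times> real) measure).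
         measure M {w\<in>space M. V w \<in> S \<and> (X w, A w, Y0 w, Y1 w) \<in> T}
         = measure M {w\<in>space M. V w \<in> S} * measure M {w\<in>space M. (X w, A w, Y0 w, Y1 w) \<in> T}"
    and "(\<integral>w. f (X w) \<partial>M) > 0"
  shows "flip_effect M f X A Y0 Y1 V =
    (\<integral>w. real_cond_exp M (vimage_algebra (space M) X borel) (\<lambda>w. Y1 w - Y0 w) w * f (X w)
            / (\<integral>w. f (X w) \<partial>M) \<partial>M)"
proof -
  note a = assms
  interpret prob_space M by fact
  have [measurable]: "X \<in> borel_measurable M" "A \<in> borel_measurable M" "V \<in> borel_measurable M"
    "f \<in> borel_measurable borel" using a by auto
  have [measurable]: "Y0 \<in> borel_measurable M" "Y1 \<in> borel_measurable M"
    using a(5,6) by auto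
  define c where "c = (\<integral>w. f (X w) \<partial>M)"
  define F where "F = vimage_algebra (space M) X borel"
  define h1 where "h1 z = snd (snd (snd z)) - fst (snd (snd z))" for z :: "(real ^ 'd) \<times> real \<times> real \<times> real"
  have h1m: "h1 \<in> borel_measurable borel" unfolding h1_def
    by (intro borel_measurable_continuous_onI continuous_intros)
  have intd: "integrable M (\<lambda>w. Y1 w - Y0 w)" using a(5,6) by simp
  have k1: "(\<integral>w. of_bool (V w \<le> f (X w)) * h1 (X w, A w, Y0 w, Y1 w) \<partial>M)
       = (\<integral>w. f (X w) * h1 (X w, A w, Y0 w, Y1 w) \<partial>M)"
    by (rule key[OF a(1,2,3) _ _ a(7,8,9,10,11) h1m]) (use intd in \<open>auto simp: h1_def\<close>)
  have k2: "(\<integral>w. of_bool (V w \<le> f (X w)) * (\<lambda>_. 1) (X w, A w, Y0 w, Y1 w) \<partial>M)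
       = (\<integral>w. f (X w) * (\<lambda>_. 1) (X w, A w, Y0 w, Y1 w) \<partial>M)"
    by (rule key[OF a(1,2,3) _ _ a(7,8,9,10,11)]) auto
  have num: "(\<integral>w. pot_outcome Y0 Y1 (flip1 f X A V) w - pot_outcome Y0 Y1 (flip0 f X A V) w \<partial>M)
      = (\<integral>w. f (X w) * (Y1 w - Y0 w) \<partial>M)"
  proof -
    have "(\<integral>w. pot_outcome Y0 Y1 (flip1 f X A V) w - pot_outcome Y0 Y1 (flip0 f X A V) w \<partial>M)
        = (\<integral>w. of_bool (V w \<le> f (X w)) * h1 (X w, A w, Y0 w, Y1 w) \<partial>M)"
    proof (rule Bochner_Integration.integral_cong[OF refl])
      fix w assume "w \<in> space M"
      then have "A w = 0 \<or> A w = 1" using a(4) by auto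
      then show "pot_outcome Y0 Y1 (flip1 f X A V) w - pot_outcome Y0 Y1 (flip0 f X A V) w
          = of_bool (V w \<le> f (X w)) * h1 (X w, A w, Y0 w, Y1 w)"
        by (auto simp: pot_outcome_def flip0_def flip1_def h1_def algebra_simps)
    qed
    then show ?thesis using k1 by (simp add: h1_def)
  qed
  have den: "(\<integral>w. flip1 f X A V w - flip0 f X A V w \<partial>M) = c"
  proof -
    have "(\<integral>w. flip1 f X A V w - flip0 f X A V w \<partial>M)
        = (\<integral>w. of_bool (V w \<le> f (X w)) * (\<lambda>_. 1) (X w, A w, Y0 w, Y1 w) \<partial>M)"
    proof (rule Bochner_Integration.integral_cong[OF refl])
      fix w assume "w \<in> space M"
      then have "A w = 0 \<or> A w = 1" using a(4) by auto
      then show "flip1 f X A V w - flip0 f X A V w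
          = of_bool (V w \<le> f (X w)) * (\<lambda>_. 1) (X w, A w, Y0 w, Y1 w)"
        by (auto simp: flip0_def flip1_def)
    qed
    then show ?thesis using k2 by (simp add: c_def)
  qed
  have sub: "subalgebra M F"
    unfolding subalgebra_def F_def
    using measurable_iff_sets[THEN iffD1, OF a(2)] by auto
  interpret S: finite_measure_subalgebra M F
    by unfold_locales (rule sub)
  have fXF: "(\<lambda>w. f (X w)) \<in> borel_measurable F"
    unfolding F_def
    by (rule measurable_compose[OF measurable_vimage_algebra1 a(7)]) auto
  have intfd: "integrable M (\<lambda>w. f (X w) * (Y1 w - Y0 w))"
  proof (rule Bochner_Integration.integrable_bound[OF intd])
    show "(\<lambda>w. f (X w) * (Y1 w - Y0 w)) \<in> borel_measurable M" by measurable
    show "AE w in M. norm (f (X w) * (Y1 w - Y0 w)) \<le> norm (Y1 w - Y0 w)"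
      using a(8) by (auto simp: abs_mult intro!: mult_left_le_one_le)
  qed
  have ce: "(\<integral>w. f (X w) * real_cond_exp M F (\<lambda>w. Y1 w - Y0 w) w \<partial>M)
      = (\<integral>w. f (X w) * (Y1 w - Y0 w) \<partial>M)"
    by (rule S.real_cond_exp_intg(2)[OF intfd fXF]) simp
  have "(\<integral>w. real_cond_exp M F (\<lambda>w. Y1 w - Y0 w) w * f (X w) / c \<partial>M)
      = (\<integral>w. f (X w) * real_cond_exp M F (\<lambda>w. Y1 w - Y0 w) w \<partial>M) / c"
    by (simp add: mult.commute)
  also have "\<dots> = (\<integral>w. f (X w) * (Y1 w - Y0 w) \<partial>M) / c" using ce by simp
  finally have r: "(\<integral>w. real_cond_exp M F (\<lambda>w. Y1 w - Y0 w) w * f (X w) / c \<partial>M)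
      = (\<integral>w. f (X w) * (Y1 w - Y0 w) \<partial>M) / c" .
  show ?thesis
    unfolding flip_effect_def num den F_def[symmetric] c_def[symmetric] r ..
qed

end
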